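(* Let $F_0$ be a probability distribution on $\mathbb{R}$ with $\int|z|\,dF_0(z)<\infty$. Let $\alpha,\alpha_0,\beta,\beta_0\in\mathbb{R}$, $\sigma,\sigma_0,\tau,\tau_0>0$, $\epsilon>0$, and write $\theta=(\alpha,\beta,\sigma,\tau)$, $\theta_0=(\alpha_0,\beta_0,\sigma_0,\tau_0)$. Suppose \[ \frac{3|\sigma^2-\sigma_0^2|}{2\sigma_0^2}\le\epsilon,\quad \frac{3|\tau^2-\tau_0^2|}{2\tau_0^2}\le\epsilon,\quad \frac{|\alpha-\alpha_0|}{\tau_0}\le\epsilon,\quad \frac{|\beta-\beta_0|}{\tau_0}\int|z|\,dF_0(z)\le\epsilon. \] Then $\|p_{\theta,F_0}-p_{\theta_0,F_0}\|_1\le 4\epsilon$.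
   Context: Errors-in-variables model: for $\theta=(\alpha,\beta,\sigma,\tau)$ and a probability measure $F$ on $\mathbb{R}$, $p_{\theta,F}(x,y)=\int\phi_\sigma(x-z)\,\phi_\tau(y-\alpha-\beta z)\,dF(z)$ for $(x,y)\in\mathbb{R}^2$, where $\phi_s$ is the density of the normal distribution with mean $0$ and variance $s^2$. $\|\cdot\|_1$ is the $L^1$ norm with respect to Lebesgue measure on $\mathbb{R}^2$. *)

theory Defs
  imports "HOL-Probability.Probability"
begin

text \<open>Errors-in-variables mixture density p_{theta,F}(x,y), theta = (alpha, beta, sigma, tau);
  phi_s is the N(0, s^2) density, i.e. normal_density 0 s.\<close>
definition eiv_density :: "real \<Rightarrow> real \<Rightarrow> real \<Rightarrow> real \<Rightarrow> real measure \<Rightarrow> real \<times> real \<Rightarrow> real" where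
  "eiv_density \<alpha> \<beta> \<sigma> \<tau> F = (\<lambda>(x, y).
     \<integral>z. normal_density 0 \<sigma> (x - z) * normal_density 0 \<tau> (y - \<alpha> - \<beta> * z) \<partial>F)"

definition L1_dist :: "(real \<times> real \<Rightarrow> real) \<Rightarrow> (real \<times> real \<Rightarrow> real) \<Rightarrow> ennreal" where
  "L1_dist p q = (\<integral>\<^sup>+ w. ennreal \<bar>p w - q w\<bar> \<partial>lborel)"

end

theory Submission
  imports Defs
begin

lemma nd_le: "s > 0 \<Longrightarrow> normal_density c s x \<le> 1 / sqrt (2 * pi * s\<^sup>2)"
  unfolding normal_density_def by (simp add: divide_le_eq)

lemma nd_nn1: "s > 0 \<Longrightarrow> (\<integral>\<^sup>+x. ennreal (normal_density c s x) \<partial>lborel) = 1"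
  by (subst nn_integral_eq_integral) auto

lemma nd_ratio:
  assumes "0 < a" "a \<le> b"
  shows "(a / b) * normal_density c a x \<le> normal_density c b x"
proof -
  have s1: "sqrt (2 * pi * a\<^sup>2) = sqrt (2*pi) * a" using assms by (simp add: real_sqrt_mult)
  have s2: "sqrt (2 * pi * b\<^sup>2) = sqrt (2*pi) * b" using assms by (simp add: real_sqrt_mult)
  have e: "exp (-(x - c)\<^sup>2 / (2 * a\<^sup>2)) \<le> exp (-(x - c)\<^sup>2 / (2 * b\<^sup>2))"
  proof -
    have "(x - c)\<^sup>2 / (2 * b\<^sup>2) \<le> (x - c)\<^sup>2 / (2 * a\<^sup>2)"
      using assms by (intro divide_left_mono mult_left_mono power_mono) auto
    then show ?thesis by simp
  qed
  have "(a / b) * normal_density c a x = 1 / (sqrt (2*pi) * b) * exp (-(x - c)\<^sup>2 / (2 * a\<^sup>2))"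
    unfolding normal_density_def s1 using assms by simp
  also have "\<dots> \<le> 1 / (sqrt (2*pi) * b) * exp (-(x - c)\<^sup>2 / (2 * b\<^sup>2))"
    using e assms by (intro mult_left_mono) auto
  also have "\<dots> = normal_density c b x" unfolding normal_density_def s2 ..
  finally show ?thesis .
qed

lemma var_bound_ord:
  assumes "0 < a" "a \<le> b"
  shows "(\<integral>\<^sup>+x. ennreal \<bar>normal_density c a x - normal_density c b x\<bar> \<partial>lborel) \<le> ennreal (2 * (1 - a / b))"
proof -
  let ?k = "a / b"
  have b: "b > 0" using assms by simp
  have pw: "\<bar>normal_density c a x - normal_density c b x\<bar> \<le> normal_density c b x + (1 - 2 * ?k) * normal_density c a x" for x
  proof -
    have k1: "?k \<le> 1" using assms by simp
    have "?k * normal_density c a x \<le> normal_density c a x"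
      using mult_right_mono[OF k1 normal_density_nonneg] by simp
    moreover have "\<And>k P Q::real. k*P \<le> Q \<Longrightarrow> k*P \<le> P \<Longrightarrow> \<bar>P - Q\<bar> \<le> Q + (1 - 2*k)*P"
    proof -
      fix k P Q :: real assume "k*P \<le> Q" "k*P \<le> P"
      moreover have "(1 - 2*k)*P = P - 2*(k*P)" by (simp add: algebra_simps)
      ultimately show "\<bar>P - Q\<bar> \<le> Q + (1 - 2*k)*P" by linarith
    qed
    ultimately show ?thesis using nd_ratio[OF assms, of c x] by blast
  qed
  have int: "integrable lborel (\<lambda>x. normal_density c b x + (1 - 2 * ?k) * normal_density c a x)" by (intro Bochner_Integration.integrable_add integrable_mult_right integrable_normal_density b assms(1))
  have "(\<integral>\<^sup>+x. ennreal \<bar>normal_density c a x - normal_density c b x\<bar> \<partial>lborel)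
      \<le> (\<integral>\<^sup>+x. ennreal (normal_density c b x + (1 - 2 * ?k) * normal_density c a x) \<partial>lborel)"
    by (intro nn_integral_mono ennreal_leI pw)
  also have "\<dots> = ennreal (\<integral>x. normal_density c b x + (1 - 2 * ?k) * normal_density c a x \<partial>lborel)"
    apply (rule nn_integral_eq_integral[OF int]) using pw by (auto intro: order_trans[OF abs_ge_zero])
  also have "(\<integral>x. normal_density c b x + (1 - 2 * ?k) * normal_density c a x \<partial>lborel) = 2 * (1 - ?k)"
    using assms b by (simp add: integral_add)
  finally show ?thesis .
qed

lemma var_bound:
  assumes "0 < a" "0 < b"
  shows "(\<integral>\<^sup>+x. ennreal \<bar>normal_density c a x - normal_density c b x\<bar> \<partial>lborel) \<le> ennreal (2 * (1 - min a b / max a b))"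
proof (cases "a \<le> b")
  case True then show ?thesis using var_bound_ord[OF assms(1) True] by simp
next
  case False
  then have "(\<integral>\<^sup>+x. ennreal \<bar>normal_density c b x - normal_density c a x\<bar> \<partial>lborel) \<le> ennreal (2 * (1 - b / a))"
    using var_bound_ord[OF assms(2), of a c] by simp
  then show ?thesis using False by (simp add: abs_minus_commute)
qed



lemma nd_deriv:
  assumes "s > 0"
  shows "((\<lambda>u. normal_density u s y) has_real_derivative (normal_density u s y * (y - u) / s\<^sup>2)) (at u within X)"
proof -
  have "((\<lambda>u. -(y - u)\<^sup>2 / (2 * s\<^sup>2)) has_real_derivative (y - u) / s\<^sup>2) (at u within X)"
    using assms by (auto intro!: derivative_eq_intros simp: power2_eq_square field_simps)
  from DERIV_chain2[OF DERIV_exp this]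
  have "((\<lambda>u. exp (-(y - u)\<^sup>2 / (2 * s\<^sup>2))) has_real_derivative exp (-(y - u)\<^sup>2 / (2 * s\<^sup>2)) * ((y - u) / s\<^sup>2)) (at u within X)" .
  from DERIV_cmult[OF this, of "1 / sqrt (2 * pi * s\<^sup>2)"] show ?thesis
    unfolding normal_density_def by (simp add: mult.assoc)
qed



lemma shift_pt:
  assumes s: "s > 0" and c: "c0 \<le> c1"
  shows "ennreal \<bar>normal_density c1 s y - normal_density c0 s y\<bar>
     \<le> (\<integral>\<^sup>+u. indicator {c0..c1} u * ennreal \<bar>normal_density u s y * (y - u) / s\<^sup>2\<bar> \<partial>lborel)"
proof -
  define f where "f u = normal_density u s y * (y - u) / s\<^sup>2" for u
  have cont: "continuous_on A f" for A
    unfolding f_def normal_density_def by (intro continuous_intros) (use s in auto)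
  have "(LBINT u=c0..c1. f u) = normal_density c1 s y - normal_density c0 s y"
    apply (rule interval_integral_FTC_finite[OF cont])
    using nd_deriv[OF s] by (simp add: has_real_derivative_iff_has_vector_derivative[symmetric] f_def)
  moreover have "(LBINT u=c0..c1. f u) = (LBINT u:{c0..c1}. f u)"
    using c by (rule interval_integral_Icc)
  moreover have "set_integrable lborel {c0..c1} f"
    by (rule borel_integrable_atLeastAtMost'[OF cont])
  ultimately have "ennreal \<bar>normal_density c1 s y - normal_density c0 s y\<bar>
     \<le> (\<integral>\<^sup>+u. norm (indicator {c0..c1} u *\<^sub>R f u) \<partial>lborel)"
    unfolding set_lebesgue_integral_def set_integrable_def
    using integral_norm_bound_ennreal by (metis real_norm_def)
  also have "\<dots> = (\<integral>\<^sup>+u. indicator {c0..c1} u * ennreal \<bar>f u\<bar> \<partial>lborel)"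
    by (intro nn_integral_cong) (auto simp: indicator_def)
  finally show ?thesis unfolding f_def .
qed



lemma abs_moment:
  assumes s: "s > 0"
  shows "(\<integral>\<^sup>+y. ennreal \<bar>normal_density u s y * (y - u) / s\<^sup>2\<bar> \<partial>lborel) = ennreal (sqrt (2/pi) / s)"
proof -
  have "(\<integral>\<^sup>+y. ennreal \<bar>normal_density u s y * (y - u) / s\<^sup>2\<bar> \<partial>lborel)
     = (\<integral>\<^sup>+y. ennreal (normal_density u s y * \<bar>y - u\<bar> ^ (2 * 0 + 1) / s\<^sup>2) \<partial>lborel)"
    by (intro nn_integral_cong) (simp add: abs_mult)
  also have "\<dots> = ennreal (\<integral>y. normal_density u s y * \<bar>y - u\<bar> ^ (2 * 0 + 1) / s\<^sup>2 \<partial>lborel)"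
    apply (rule nn_integral_eq_integral)
     apply (intro integrable_divide integrable_normal_moment_abs s)
    by simp
  also have "(\<integral>y. normal_density u s y * \<bar>y - u\<bar> ^ (2 * 0 + 1) / s\<^sup>2 \<partial>lborel) = s * sqrt (2/pi) / s\<^sup>2"
    using integral_normal_moment_abs_odd[OF s, where k=0 and \<mu>=u] by simp
  also have "s * sqrt (2/pi) / s\<^sup>2 = sqrt (2/pi) / s" using s by (simp add: power2_eq_square)
  finally show ?thesis .
qed

lemma shift_bound_ord:
  assumes s: "s > 0" and c: "c0 \<le> c1"
  shows "(\<integral>\<^sup>+y. ennreal \<bar>normal_density c1 s y - normal_density c0 s y\<bar> \<partial>lborel) \<le> ennreal ((c1 - c0) / s)"
proof -
  have "(\<integral>\<^sup>+y. ennreal \<bar>normal_density c1 s y - normal_density c0 s y\<bar> \<partial>lborel)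
     \<le> (\<integral>\<^sup>+y. \<integral>\<^sup>+u. indicator {c0..c1} u * ennreal \<bar>normal_density u s y * (y - u) / s\<^sup>2\<bar> \<partial>lborel \<partial>lborel)"
    by (intro nn_integral_mono shift_pt[OF s c])
  also have "\<dots> = (\<integral>\<^sup>+u. \<integral>\<^sup>+y. indicator {c0..c1} u * ennreal \<bar>normal_density u s y * (y - u) / s\<^sup>2\<bar> \<partial>lborel \<partial>lborel)"
    by (rule lborel_pair.Fubini') (unfold normal_density_def, measurable)
  also have "\<dots> = (\<integral>\<^sup>+u. indicator {c0..c1} u * ennreal (sqrt (2/pi) / s) \<partial>lborel)"
    by (intro nn_integral_cong) (simp add: nn_integral_cmult abs_moment[OF s] del: abs_divide)
  also have "\<dots> = ennreal (sqrt (2/pi) / s) * ennreal (c1 - c0)"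
    using c by (subst mult.commute) (simp add: nn_integral_cmult_indicator)
  also have "\<dots> = ennreal (sqrt (2/pi) / s * (c1 - c0))"
    using c s by (subst ennreal_mult) auto
  also have "\<dots> \<le> ennreal ((c1 - c0) / s)"
  proof (rule ennreal_leI)
    have sq: "sqrt (2/pi) \<le> 1" using pi_gt3 by simp
    show "sqrt (2/pi) / s * (c1 - c0) \<le> (c1 - c0) / s"
    proof -
      have "sqrt (2/pi) * (c1 - c0) \<le> 1 * (c1 - c0)" using c sq by (intro mult_right_mono) auto
      then show ?thesis using s by (simp add: divide_right_mono)
    qed
  qed
  finally show ?thesis .
qed

lemma shift_bound:
  assumes s: "s > 0"
  shows "(\<integral>\<^sup>+y. ennreal \<bar>normal_density c1 s y - normal_density c0 s y\<bar> \<partial>lborel) \<le> ennreal (\<bar>c1 - c0\<bar> / s)"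
proof (cases "c0 \<le> c1")
  case True then show ?thesis using shift_bound_ord[OF s True] by simp
next
  case False
  then have "c1 \<le> c0" by simp
  from shift_bound_ord[OF s this] False show ?thesis by (simp add: abs_minus_commute)
qed



lemma pair_integral:
  assumes [measurable]: "f \<in> borel_measurable (lborel \<Otimes>\<^sub>M lborel)"
  shows "(\<integral>\<^sup>+w. f w \<partial>(lborel :: (real \<times> real) measure)) = (\<integral>\<^sup>+x. \<integral>\<^sup>+y. f (x, y) \<partial>lborel \<partial>lborel)"
  by (simp add: lborel.nn_integral_fst lborel_prod[symmetric])

lemma prod_bound:
  assumes s: "\<sigma> > 0" "\<sigma>0 > 0" "\<tau> > 0" "\<tau>0 > 0"
  shows "(\<integral>\<^sup>+w. ennreal \<bar>normal_density m \<sigma> (fst w) * normal_density c \<tau> (snd w)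
            - normal_density m \<sigma>0 (fst w) * normal_density c0 \<tau>0 (snd w)\<bar> \<partial>lborel)
     \<le> ennreal (2 * (1 - min \<sigma> \<sigma>0 / max \<sigma> \<sigma>0)) + ennreal (2 * (1 - min \<tau> \<tau>0 / max \<tau> \<tau>0))
        + ennreal (\<bar>c - c0\<bar> / \<tau>0)"
proof -
  let ?A = "normal_density m \<sigma>" and ?Az = "normal_density m \<sigma>0"
  let ?B = "normal_density c \<tau>" and ?Bm = "normal_density c \<tau>0" and ?Bz = "normal_density c0 \<tau>0"
  have pw: "\<bar>?A x * ?B y - ?Az x * ?Bz y\<bar> \<le> \<bar>?A x - ?Az x\<bar> * ?B y + ?Az x * \<bar>?B y - ?Bm y\<bar> + ?Az x * \<bar>?Bm y - ?Bz y\<bar>" for x y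
  proof -
    have "?A x * ?B y - ?Az x * ?Bz y = (?A x - ?Az x) * ?B y + ?Az x * (?B y - ?Bm y) + ?Az x * (?Bm y - ?Bz y)"
      by (simp add: algebra_simps)
    also have "\<bar>\<dots>\<bar> \<le> \<bar>?A x - ?Az x\<bar> * ?B y + ?Az x * \<bar>?B y - ?Bm y\<bar> + ?Az x * \<bar>?Bm y - ?Bz y\<bar>"
      by (rule order_trans[OF abs_triangle_ineq] add_mono order_trans[OF abs_triangle_ineq])+
         (simp_all add: abs_mult)
    finally show ?thesis .
  qed
  have "(\<integral>\<^sup>+w. ennreal \<bar>?A (fst w) * ?B (snd w) - ?Az (fst w) * ?Bz (snd w)\<bar> \<partial>lborel)
      = (\<integral>\<^sup>+x. \<integral>\<^sup>+y. ennreal \<bar>?A x * ?B y - ?Az x * ?Bz y\<bar> \<partial>lborel \<partial>lborel)"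
    by (subst pair_integral) (simp_all)
  also have "\<dots> \<le> (\<integral>\<^sup>+x. \<integral>\<^sup>+y. ennreal \<bar>?A x - ?Az x\<bar> * ennreal (?B y) + ennreal (?Az x) * ennreal \<bar>?B y - ?Bm y\<bar>
       + ennreal (?Az x) * ennreal \<bar>?Bm y - ?Bz y\<bar> \<partial>lborel \<partial>lborel)"
    apply (intro nn_integral_mono)
    apply (subst ennreal_mult'[symmetric] ennreal_mult[symmetric] ennreal_plus[symmetric], simp, simp)+
    by (intro ennreal_leI pw)
  also have "\<dots> = (\<integral>\<^sup>+x. ennreal \<bar>?A x - ?Az x\<bar> * (\<integral>\<^sup>+y. ennreal (?B y) \<partial>lborel)
       + ennreal (?Az x) * (\<integral>\<^sup>+y. ennreal \<bar>?B y - ?Bm y\<bar> \<partial>lborel)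
       + ennreal (?Az x) * (\<integral>\<^sup>+y. ennreal \<bar>?Bm y - ?Bz y\<bar> \<partial>lborel) \<partial>lborel)"
    by (intro nn_integral_cong) (simp add: nn_integral_add nn_integral_cmult)
  also have "\<dots> \<le> (\<integral>\<^sup>+x. ennreal \<bar>?A x - ?Az x\<bar> * 1
       + ennreal (?Az x) * ennreal (2 * (1 - min \<tau> \<tau>0 / max \<tau> \<tau>0))
       + ennreal (?Az x) * ennreal (\<bar>c - c0\<bar> / \<tau>0) \<partial>lborel)"
    using nd_nn1[OF s(3), of c] var_bound[OF s(3) s(4), of c] shift_bound[OF s(4), of c c0]
    by (intro nn_integral_mono add_mono mult_left_mono) auto
  also have "\<dots> = (\<integral>\<^sup>+x. ennreal \<bar>?A x - ?Az x\<bar> \<partial>lborel)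
       + ennreal (2 * (1 - min \<tau> \<tau>0 / max \<tau> \<tau>0)) * (\<integral>\<^sup>+x. ennreal (?Az x) \<partial>lborel)
       + ennreal (\<bar>c - c0\<bar> / \<tau>0) * (\<integral>\<^sup>+x. ennreal (?Az x) \<partial>lborel)"
    by (simp add: nn_integral_add nn_integral_multc ac_simps)
  also have "\<dots> \<le> ennreal (2 * (1 - min \<sigma> \<sigma>0 / max \<sigma> \<sigma>0)) + ennreal (2 * (1 - min \<tau> \<tau>0 / max \<tau> \<tau>0))
        + ennreal (\<bar>c - c0\<bar> / \<tau>0)"
    using nd_nn1[OF s(2), of m] var_bound[OF s(1) s(2), of m] by (intro add_mono) auto
  finally show ?thesis .
qed

lemma prod_bound2:
  assumes s: "\<sigma> > 0" "\<sigma>0 > 0" "\<tau> > 0" "\<tau>0 > 0"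
  shows "(\<integral>\<^sup>+w. ennreal \<bar>normal_density m \<sigma> (fst w) * normal_density c \<tau> (snd w)
            - normal_density m \<sigma>0 (fst w) * normal_density c0 \<tau>0 (snd w)\<bar> \<partial>lborel) \<le> 2"
proof -
  let ?A = "normal_density m \<sigma>" and ?Az = "normal_density m \<sigma>0"
  let ?B = "normal_density c \<tau>" and ?Bz = "normal_density c0 \<tau>0"
  have "(\<integral>\<^sup>+w. ennreal \<bar>?A (fst w) * ?B (snd w) - ?Az (fst w) * ?Bz (snd w)\<bar> \<partial>lborel)
      = (\<integral>\<^sup>+x. \<integral>\<^sup>+y. ennreal \<bar>?A x * ?B y - ?Az x * ?Bz y\<bar> \<partial>lborel \<partial>lborel)"
    by (subst pair_integral) (simp_all)
  also have "\<dots> \<le> (\<integral>\<^sup>+x. \<integral>\<^sup>+y. ennreal (?A x) * ennreal (?B y) + ennreal (?Az x) * ennreal (?Bz y) \<partial>lborel \<partial>lborel)"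
    apply (intro nn_integral_mono)
    apply (subst ennreal_mult'[symmetric] ennreal_mult[symmetric] ennreal_plus[symmetric], simp, simp)+
    by (intro ennreal_leI) (auto simp: abs_if)
  also have "\<dots> = (\<integral>\<^sup>+x. ennreal (?A x) * (\<integral>\<^sup>+y. ennreal (?B y) \<partial>lborel)
       + ennreal (?Az x) * (\<integral>\<^sup>+y. ennreal (?Bz y) \<partial>lborel) \<partial>lborel)"
    by (intro nn_integral_cong) (simp add: nn_integral_add nn_integral_cmult)
  also have "\<dots> = 2"
    using s by (simp add: nd_nn1 nn_integral_add)
  finally show ?thesis by simp
qed



lemma vb_le:
  fixes a a0 e :: real
  assumes a: "a > 0" and a0: "a0 > 0" and hyp: "3 * \<bar>a\<^sup>2 - a0\<^sup>2\<bar> / (2 * a0\<^sup>2) \<le> e" and e: "e < 1/2"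
  shows "2 * (1 - min a a0 / max a a0) \<le> e"
proof -
  define P where "P = a\<^sup>2"
  define Q where "Q = a0\<^sup>2"
  have Q: "Q > 0" "P > 0" using a a0 by (auto simp: P_def Q_def)
  have g: "3 * \<bar>P - Q\<bar> \<le> e * (2 * Q)" using hyp Q unfolding P_def[symmetric] Q_def[symmetric]
    by (simp add: pos_divide_le_eq)
  show ?thesis
  proof (cases "a \<le> a0")
    case True
    have sq: "P \<le> Q" unfolding P_def Q_def using True a by (intro power_mono) auto
    have "\<bar>P - Q\<bar> = Q - P" using sq by (subst abs_of_nonpos) auto
    then have h: "3 * (Q - P) \<le> e * (2 * Q)" using g by simp
    have "e * (2 * Q) < Q" using mult_strict_right_mono[OF e, of "2*Q"] Q by simp
    with h have "3 * (Q - P) < Q" by (rule le_less_trans)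
    then have "Q < 9 * P" using Q by (simp add: algebra_simps)
    then have "a0\<^sup>2 < (3*a)\<^sup>2" unfolding P_def Q_def by (simp add: power_mult_distrib)
    then have a3: "a0 < 3 * a" using a power_less_imp_less_base[of a0 2 "3*a"] by simp
    have "2 * (1 - a / a0) * (2 * Q) = 4 * a0 * (a0 - a)" using a0 unfolding Q_def by (simp add: field_simps power2_eq_square)
    also have "\<dots> \<le> 3 * (a0 + a) * (a0 - a)" using a3 True by (intro mult_right_mono) auto
    also have "\<dots> = 3 * (Q - P)" unfolding P_def Q_def by (simp add: algebra_simps power2_eq_square)
    also have "\<dots> \<le> e * (2 * Q)" using h by simp
    finally have "2 * (1 - a / a0) \<le> e" using Q by (simp add: mult_le_cancel_right)
    then show ?thesis using True by simp
  next
    case False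
    have sq: "Q \<le> P" unfolding P_def Q_def using False a0 by (intro power_mono) auto
    have "\<bar>P - Q\<bar> = P - Q" using sq by (subst abs_of_nonneg) auto
    then have h: "3 * (P - Q) \<le> e * (2 * Q)" using g by simp
    have "2 * (1 - a0 / a) * (2 * Q) = 4 * a0\<^sup>2 * (a - a0) / a" using a False unfolding Q_def by (simp add: field_simps power2_eq_square)
    also have "\<dots> \<le> 4 * a0\<^sup>2 * (a - a0) / a0" using a a0 False by (intro divide_left_mono) auto
    also have "\<dots> = 4 * a0 * (a - a0)" using a0 by (simp add: power2_eq_square)
    also have "\<dots> \<le> 3 * (a + a0) * (a - a0)" using False a0 by (intro mult_right_mono) auto
    also have "\<dots> = 3 * (P - Q)" unfolding P_def Q_def by (simp add: algebra_simps power2_eq_square)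
    also have "\<dots> \<le> e * (2 * Q)" using h by simp
    finally have "2 * (1 - a0 / a) \<le> e" using Q by (simp add: mult_le_cancel_right)
    then show ?thesis using False by simp
  qed
qed



lemma nd0: "normal_density 0 s (x - c) = normal_density c s x"
  by (simp add: normal_density_def)

lemma ed_eq: "eiv_density a b s t F w = (\<integral>z. normal_density z s (fst w) * normal_density (a + b * z) t (snd w) \<partial>F)"
proof -
  obtain x y where w: "w = (x, y)" by (cases w)
  have "normal_density 0 t (y - a - b * z) = normal_density (a + b * z) t y" for z
    by (simp add: normal_density_def diff_diff_eq)
  moreover have "normal_density 0 s (x - z) = normal_density z s x" for z by (rule nd0)
  ultimately show ?thesis unfolding w eiv_density_def by simp
qed

lemma nd_abs_le: "s > 0 \<Longrightarrow> \<bar>normal_density c s x\<bar> \<le> 1 / sqrt (2 * pi * s\<^sup>2)"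
  using nd_le by simp

theorem mainTheorem9:
  fixes F0 :: "real measure" and \<alpha> \<alpha>0 \<beta> \<beta>0 \<sigma> \<sigma>0 \<tau> \<tau>0 \<epsilon> :: real
  assumes "prob_space F0" and "sets F0 = sets borel"
    and "integrable F0 (\<lambda>z. \<bar>z\<bar>)"
    and "\<sigma> > 0" "\<sigma>0 > 0" "\<tau> > 0" "\<tau>0 > 0" "\<epsilon> > 0"
    and "3 * \<bar>\<sigma>\<^sup>2 - \<sigma>0\<^sup>2\<bar> / (2 * \<sigma>0\<^sup>2) \<le> \<epsilon>"
    and "3 * \<bar>\<tau>\<^sup>2 - \<tau>0\<^sup>2\<bar> / (2 * \<tau>0\<^sup>2) \<le> \<epsilon>"
    and "\<bar>\<alpha> - \<alpha>0\<bar> / \<tau>0 \<le> \<epsilon>"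
    and "\<bar>\<beta> - \<beta>0\<bar> / \<tau>0 * (\<integral>z. \<bar>z\<bar> \<partial>F0) \<le> \<epsilon>"
  shows "L1_dist (eiv_density \<alpha> \<beta> \<sigma> \<tau> F0) (eiv_density \<alpha>0 \<beta>0 \<sigma>0 \<tau>0 F0) \<le> ennreal (4 * \<epsilon>)"
proof -
  interpret F: prob_space F0 by fact
  note pos = assms(4-7)
  have mF: "measurable F0 N = measurable borel N" for N :: "real measure"
    by (rule measurable_cong_sets[OF assms(2) refl])
  have mP: "measurable (lborel \<Otimes>\<^sub>M F0) N = measurable ((lborel :: (real \<times> real) measure) \<Otimes>\<^sub>M borel) N" for N :: "real measure"
    by (rule measurable_cong_sets[OF sets_pair_measure_cong[OF refl assms(2)] refl])
  have sl: "sets (lborel :: (real \<times> real) measure) = sets ((borel :: real measure) \<Otimes>\<^sub>M (borel :: real measure))"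
    by (simp only: borel_prod sets_lborel)
  have mPe: "measurable (lborel \<Otimes>\<^sub>M F0) N = measurable (((borel :: real measure) \<Otimes>\<^sub>M (borel :: real measure)) \<Otimes>\<^sub>M borel) N" for N :: "ennreal measure"
    by (rule measurable_cong_sets[OF sets_pair_measure_cong[OF sl assms(2)] refl])
  define g1 where "g1 w z = normal_density z \<sigma> (fst w) * normal_density (\<alpha> + \<beta> * z) \<tau> (snd w)" for w :: "real \<times> real" and z
  define g2 where "g2 w z = normal_density z \<sigma>0 (fst w) * normal_density (\<alpha>0 + \<beta>0 * z) \<tau>0 (snd w)" for w :: "real \<times> real" and z
  have int_g: "integrable F0 (\<lambda>z. normal_density z sa (fst w) * normal_density (aa + bb * z) sb (snd w))"
    if "sa > 0" "sb > 0" for w sa sb aa bb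
  proof -
    have "(\<lambda>z. normal_density z sa (fst w) * normal_density (aa + bb * z) sb (snd w)) \<in> borel_measurable F0"
      unfolding mF normal_density_def by measurable
    moreover have "AE z in F0. norm (normal_density z sa (fst w) * normal_density (aa + bb * z) sb (snd w))
        \<le> 1 / sqrt (2 * pi * sa\<^sup>2) * (1 / sqrt (2 * pi * sb\<^sup>2))"
    proof (rule AE_I2)
      fix z
      show "norm (normal_density z sa (fst w) * normal_density (aa + bb * z) sb (snd w)) \<le> 1 / sqrt (2 * pi * sa\<^sup>2) * (1 / sqrt (2 * pi * sb\<^sup>2))"
        unfolding real_norm_def abs_mult
        by (rule mult_mono[OF nd_abs_le[OF that(1)] nd_abs_le[OF that(2)]]) auto
    qed
    ultimately show ?thesis by (intro F.integrable_const_bound) auto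
  qed
  have i1: "integrable F0 (g1 w)" for w unfolding g1_def[abs_def] by (rule int_g) (use pos in auto)
  have i2: "integrable F0 (g2 w)" for w unfolding g2_def[abs_def] by (rule int_g) (use pos in auto)
  have "L1_dist (eiv_density \<alpha> \<beta> \<sigma> \<tau> F0) (eiv_density \<alpha>0 \<beta>0 \<sigma>0 \<tau>0 F0)
      = (\<integral>\<^sup>+w. ennreal \<bar>\<integral>z. g1 w z - g2 w z \<partial>F0\<bar> \<partial>lborel)"
    unfolding L1_dist_def ed_eq g1_def[symmetric] g2_def[symmetric]
    by (simp add: Bochner_Integration.integral_diff[OF i1 i2])
  also have "\<dots> \<le> (\<integral>\<^sup>+w. \<integral>\<^sup>+z. ennreal \<bar>g1 w z - g2 w z\<bar> \<partial>F0 \<partial>lborel)"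
    using integral_norm_bound_ennreal[OF Bochner_Integration.integrable_diff[OF i1 i2]]
    by (intro nn_integral_mono) simp
  also have "\<dots> = (\<integral>\<^sup>+z. \<integral>\<^sup>+w. ennreal \<bar>g1 w z - g2 w z\<bar> \<partial>lborel \<partial>F0)"
  proof -
    interpret P: pair_sigma_finite "lborel :: (real \<times> real) measure" F0
      by (intro pair_sigma_finite.intro lborel.sigma_finite_measure_axioms F.sigma_finite_measure_axioms)
    show ?thesis
      by (rule P.Fubini'[symmetric]) (unfold mPe g1_def g2_def normal_density_def, measurable)
  qed
  finally have L: "L1_dist (eiv_density \<alpha> \<beta> \<sigma> \<tau> F0) (eiv_density \<alpha>0 \<beta>0 \<sigma>0 \<tau>0 F0)
      \<le> (\<integral>\<^sup>+z. \<integral>\<^sup>+w. ennreal \<bar>g1 w z - g2 w z\<bar> \<partial>lborel \<partial>F0)" .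
  show ?thesis
  proof (cases "\<epsilon> < 1/2")
    case False
    have "(\<integral>\<^sup>+z. \<integral>\<^sup>+w. ennreal \<bar>g1 w z - g2 w z\<bar> \<partial>lborel \<partial>F0) \<le> (\<integral>\<^sup>+z. 2 \<partial>F0)"
      unfolding g1_def g2_def by (intro nn_integral_mono prod_bound2 pos)
    also have "\<dots> = 2" by (simp add: F.emeasure_space_1)
    also have "\<dots> \<le> ennreal (4 * \<epsilon>)"
    proof -
      have "ennreal 2 \<le> ennreal (4 * \<epsilon>)" by (rule ennreal_leI) (use False in auto)
      then show ?thesis by simp
    qed
    finally show ?thesis using L by simp
  next
    case True
    define A where "A = \<bar>\<alpha> - \<alpha>0\<bar> / \<tau>0"
    define B where "B = \<bar>\<beta> - \<beta>0\<bar> / \<tau>0"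
    have v1: "2 * (1 - min \<sigma> \<sigma>0 / max \<sigma> \<sigma>0) \<le> \<epsilon>" by (rule vb_le) (use pos assms(9) True in auto)
    have v2: "2 * (1 - min \<tau> \<tau>0 / max \<tau> \<tau>0) \<le> \<epsilon>" by (rule vb_le) (use pos assms(10) True in auto)
    have sh: "\<bar>(\<alpha> + \<beta> * z) - (\<alpha>0 + \<beta>0 * z)\<bar> / \<tau>0 \<le> A + B * \<bar>z\<bar>" for z
    proof -
      have "\<bar>(\<alpha> + \<beta> * z) - (\<alpha>0 + \<beta>0 * z)\<bar> \<le> \<bar>\<alpha> - \<alpha>0\<bar> + \<bar>\<beta> - \<beta>0\<bar> * \<bar>z\<bar>"
      proof -
        have "(\<alpha> + \<beta> * z) - (\<alpha>0 + \<beta>0 * z) = (\<alpha> - \<alpha>0) + (\<beta> - \<beta>0) * z" by (simp add: algebra_simps)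
        then show ?thesis using abs_triangle_ineq[of "\<alpha> - \<alpha>0" "(\<beta> - \<beta>0) * z"] by (simp add: abs_mult)
      qed
      then have "\<bar>(\<alpha> + \<beta> * z) - (\<alpha>0 + \<beta>0 * z)\<bar> / \<tau>0 \<le> (\<bar>\<alpha> - \<alpha>0\<bar> + \<bar>\<beta> - \<beta>0\<bar> * \<bar>z\<bar>) / \<tau>0"
        using pos by (intro divide_right_mono) auto
      then show ?thesis unfolding A_def B_def by (simp add: add_divide_distrib)
    qed
    have AB: "A \<ge> 0" "B \<ge> 0" using pos by (auto simp: A_def B_def)
    have "(\<integral>\<^sup>+z. \<integral>\<^sup>+w. ennreal \<bar>g1 w z - g2 w z\<bar> \<partial>lborel \<partial>F0) \<le> (\<integral>\<^sup>+z. ennreal (2 * \<epsilon> + A + B * \<bar>z\<bar>) \<partial>F0)"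
    proof (intro nn_integral_mono)
      fix z
      have "(\<integral>\<^sup>+w. ennreal \<bar>g1 w z - g2 w z\<bar> \<partial>lborel) \<le> ennreal (2 * (1 - min \<sigma> \<sigma>0 / max \<sigma> \<sigma>0)) + ennreal (2 * (1 - min \<tau> \<tau>0 / max \<tau> \<tau>0))
        + ennreal (\<bar>(\<alpha> + \<beta> * z) - (\<alpha>0 + \<beta>0 * z)\<bar> / \<tau>0)"
        unfolding g1_def g2_def by (intro prod_bound pos)
      also have "\<dots> \<le> ennreal \<epsilon> + ennreal \<epsilon> + ennreal (A + B * \<bar>z\<bar>)"
        using v1 v2 sh by (intro add_mono ennreal_leI) auto
      also have "\<dots> = ennreal (\<epsilon> + \<epsilon> + (A + B * \<bar>z\<bar>))"
      proof -
        have e0: "0 \<le> \<epsilon>" "0 \<le> \<epsilon> + \<epsilon>" "0 \<le> A + B * \<bar>z\<bar>" using AB assms(8) by auto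
        show ?thesis unfolding ennreal_plus[OF e0(2,3)] ennreal_plus[OF e0(1,1)] ..
      qed
      also have "\<dots> = ennreal (2 * \<epsilon> + A + B * \<bar>z\<bar>)"
        by (rule arg_cong[where f=ennreal]) simp
      finally show "(\<integral>\<^sup>+w. ennreal \<bar>g1 w z - g2 w z\<bar> \<partial>lborel) \<le> ennreal (2 * \<epsilon> + A + B * \<bar>z\<bar>)" .
    qed
    also have "\<dots> = ennreal (\<integral>z. 2 * \<epsilon> + A + B * \<bar>z\<bar> \<partial>F0)"
      apply (rule nn_integral_eq_integral)
       apply (intro Bochner_Integration.integrable_add integrable_mult_right assms(3) F.integrable_const)
      using AB assms(8) by simp
    also have "\<dots> \<le> ennreal (4 * \<epsilon>)"
    proof (rule ennreal_leI)
      have "(\<integral>z. 2 * \<epsilon> + A + B * \<bar>z\<bar> \<partial>F0) = 2 * \<epsilon> + A + B * (\<integral>z. \<bar>z\<bar> \<partial>F0)"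
        by (subst Bochner_Integration.integral_add) (auto intro!: integrable_mult_right assms(3) simp: F.prob_space)
      also have "\<dots> \<le> 4 * \<epsilon>" using assms(11,12) unfolding A_def B_def by linarith
      finally show "(\<integral>z. 2 * \<epsilon> + A + B * \<bar>z\<bar> \<partial>F0) \<le> 4 * \<epsilon>" .
    qed
    finally have "(\<integral>\<^sup>+z. \<integral>\<^sup>+w. ennreal \<bar>g1 w z - g2 w z\<bar> \<partial>lborel \<partial>F0) \<le> ennreal (4 * \<epsilon>)" .
    with L show ?thesis by (rule order_trans)
  qed
qed

end
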